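(* Let $(P,A,\lambda)$ be a marked poset and $(U_1,U_2)$ an admissible decomposition of it. Then the marked chain-order polytope $\mathcal{CO}_{U_1,U_2}(\lambda)$ is a lattice polytope, and it is normal.
   Context: A marked poset is a triple $(P,A,\lambda)$ where $(P,\prec)$ is a finite poset, $A\subseteq P$ contains all minimal and all maximal elements of $P$, and $\lambda:A\to\mathbb{Z}_{\ge 0}$, $a\mapsto\lambda_a$. A decomposition of $(P,A,\lambda)$ is a pair $(U_1,U_2)$ of disjoint sets with $U_1\cup U_2=P\setminus A$; it is admissible if there are no $u_1\in U_1$, $u_2\in U_2$ with $u_1\prec u_2$. Put $A_1=A\cup U_1$. The marked chain-order polytope $\mathcal{CO}_{U_1,U_2}(\lambda)\subset\mathbb{R}^{P\setminus A}$ is the set of $(x_p)_{p\in P\setminus A}$ such that: (i) $x_p\le\lambda_a$ whenever $p\in U_1$, $a\in A$, $p\prec a$; (ii) $\lambda_b\le x_q$ whenever $q\in U_1$, $b\in A$, $b\prec q$; (iii) $x_p\le x_q$ whenever $p,q\in U_1$, $p\prec q$; (iv) $x_p\ge0$ for $p\in U_2$; (v) for every chain $b\prec p_n\prec\cdots\prec p_1\prec a$ with $n\ge1$, $a,b\in A_1$, $p_i\in U_2$: $x_{p_1}+\cdots+x_{p_n}\le\lambda_a-\lambda_b$, where $\lambda_q$ means $x_q$ for $q\in U_1$; (vi) for every chain $p_1\prec\cdots\prec p_s\prec q$ with $q\in U_1$, $p_i\in U_2$: $x_{p_1}+\cdots+x_{p_s}\le x_q$. A lattice polytope $Q\subset\mathbb{R}^d$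 is normal if for every $n\in\mathbb{N}$ the set $nQ\cap\mathbb{Z}^d$ is the $n$-fold Minkowski sum of $Q\cap\mathbb{Z}^d$. *)

theory Defs
  imports Complex_Main
begin

text \<open>A finite poset is a finite carrier P with a strict partial order prec on it.
Points of R^(P - A) are functions 'a => real vanishing outside P - A.\<close>

definition marked_poset :: "'a set \<Rightarrow> ('a \<Rightarrow> 'a \<Rightarrow> bool) \<Rightarrow> 'a set \<Rightarrow> ('a \<Rightarrow> nat) \<Rightarrow> bool" where
  "marked_poset P prec A lam \<longleftrightarrow>
     finite P \<and>
     (\<forall>p\<in>P. \<not> prec p p) \<and>
     (\<forall>p\<in>P. \<forall>q\<in>P. \<forall>r\<in>P. prec p q \<longrightarrow> prec q r \<longrightarrow> prec p r) \<and>
     A \<subseteq> P \<and>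
     (\<forall>p\<in>P. (\<not> (\<exists>q\<in>P. prec q p)) \<longrightarrow> p \<in> A) \<and>
     (\<forall>p\<in>P. (\<not> (\<exists>q\<in>P. prec p q)) \<longrightarrow> p \<in> A)"

definition admissible_decomposition ::
  "'a set \<Rightarrow> ('a \<Rightarrow> 'a \<Rightarrow> bool) \<Rightarrow> 'a set \<Rightarrow> 'a set \<Rightarrow> 'a set \<Rightarrow> bool" where
  "admissible_decomposition P prec A U1 U2 \<longleftrightarrow>
     U1 \<inter> U2 = {} \<and> U1 \<union> U2 = P - A \<and>
     \<not> (\<exists>u1\<in>U1. \<exists>u2\<in>U2. prec u1 u2)"

text \<open>The value lambda_q, where lambda_q means x_q for q in U1.\<close>
definition lam_ext :: "'a set \<Rightarrow> ('a \<Rightarrow> nat) \<Rightarrow> ('a \<Rightarrow> real) \<Rightarrow> 'a \<Rightarrow> real" where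
  "lam_ext U1 lam x q = (if q \<in> U1 then x q else real (lam q))"

definition marked_chain_order_polytope ::
  "'a set \<Rightarrow> ('a \<Rightarrow> 'a \<Rightarrow> bool) \<Rightarrow> 'a set \<Rightarrow> ('a \<Rightarrow> nat) \<Rightarrow> 'a set \<Rightarrow> 'a set \<Rightarrow> ('a \<Rightarrow> real) set" where
  "marked_chain_order_polytope P prec A lam U1 U2 = {x.
     (\<forall>p. p \<notin> P - A \<longrightarrow> x p = 0) \<and>
     (\<forall>p\<in>U1. \<forall>a\<in>A. prec p a \<longrightarrow> x p \<le> real (lam a)) \<and>
     (\<forall>q\<in>U1. \<forall>b\<in>A. prec b q \<longrightarrow> real (lam b) \<le> x q) \<and>
     (\<forall>p\<in>U1. \<forall>q\<in>U1. prec p q \<longrightarrow> x p \<le> x q) \<and>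
     (\<forall>p\<in>U2. 0 \<le> x p) \<and>
     (\<forall>a\<in>A \<union> U1. \<forall>b\<in>A \<union> U1. \<forall>cs. cs \<noteq> [] \<and> set cs \<subseteq> U2 \<and> sorted_wrt prec (b # cs @ [a])
        \<longrightarrow> sum_list (map x cs) \<le> lam_ext U1 lam x a - lam_ext U1 lam x b) \<and>
     (\<forall>q\<in>U1. \<forall>cs. cs \<noteq> [] \<and> set cs \<subseteq> U2 \<and> sorted_wrt prec (cs @ [q])
        \<longrightarrow> sum_list (map x cs) \<le> x q)}"

definition lattice_points :: "'a set \<Rightarrow> ('a \<Rightarrow> real) set" where
  "lattice_points D = {x. (\<forall>p\<in>D. x p \<in> \<int>) \<and> (\<forall>p. p \<notin> D \<longrightarrow> x p = 0)}"

definition conv_hull_fin :: "('a \<Rightarrow> real) set \<Rightarrow> ('a \<Rightarrow> real) set" where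
  "conv_hull_fin V = {x. \<exists>c. (\<forall>v\<in>V. 0 \<le> c v) \<and> sum c V = 1 \<and> x = (\<lambda>p. \<Sum>v\<in>V. c v * v p)}"

definition lattice_polytope :: "'a set \<Rightarrow> ('a \<Rightarrow> real) set \<Rightarrow> bool" where
  "lattice_polytope D Q \<longleftrightarrow> (\<exists>V. finite V \<and> V \<subseteq> lattice_points D \<and> Q = conv_hull_fin V)"

definition dilate :: "nat \<Rightarrow> ('a \<Rightarrow> real) set \<Rightarrow> ('a \<Rightarrow> real) set" where
  "dilate n Q = (\<lambda>x. (\<lambda>p. real n * x p)) ` Q"

definition minkowski_power :: "nat \<Rightarrow> ('a \<Rightarrow> real) set \<Rightarrow> ('a \<Rightarrow> real) set" where
  "minkowski_power n S = {x. \<exists>y. (\<forall>i<n. y i \<in> S) \<and> x = (\<lambda>p. \<Sum>i<n. y i p)}"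

definition normal_polytope :: "'a set \<Rightarrow> ('a \<Rightarrow> real) set \<Rightarrow> bool" where
  "normal_polytope D Q \<longleftrightarrow> lattice_polytope D Q \<and>
     (\<forall>n::nat. n \<ge> 1 \<longrightarrow> dilate n Q \<inter> lattice_points D = minkowski_power n (Q \<inter> lattice_points D))"

end

theory Submission imports Defs "HOL-Library.FuncSet" begin

lemma fr1: fixes r t :: real assumes "t \<in> \<int>" "r \<le> t" "r \<notin> \<int>" shows "r + (1 - frac r) \<le> t"
proof -
  obtain k where k: "t = of_int k" using assms(1) Ints_cases by blast
  have "r < of_int k" using assms k by (metis order_le_less Ints_of_int)
  then have "floor r < k" by (simp add: floor_less_iff)
  then have "of_int (floor r) + 1 \<le> t" using k by linarith
  then show ?thesis unfolding frac_def by simp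
qed
lemma fr2: fixes r t :: real assumes "t \<in> \<int>" "t \<le> r" shows "t \<le> r - frac r"
proof -
  obtain k where k: "t = of_int k" using assms(1) Ints_cases by blast
  have "k \<le> floor r" using assms k by (simp add: le_floor_iff)
  then show ?thesis using k unfolding frac_def by simp
qed
lemma fr3: fixes r :: real shows "r + (1 - frac r) \<in> \<int>" "r - frac r \<in> \<int>"
  unfolding frac_def by (auto simp: algebra_simps)
lemma fin_funs: assumes "finite D" "finite T"
  shows "finite {x::'a\<Rightarrow>real. (\<forall>p\<in>D. x p \<in> T) \<and> (\<forall>p. p\<notin>D \<longrightarrow> x p = 0)}" (is "finite ?F")
proof (rule finite_imageD)
  show "inj_on (\<lambda>x. restrict x D) ?F"
    by (rule inj_onI) (simp add: fun_eq_iff restrict_def split: if_splits, metis)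
  have "(\<lambda>x. restrict x D) ` ?F \<subseteq> PiE D (\<lambda>_. T)" by auto
  then show "finite ((\<lambda>x. restrict x D) ` ?F)" using finite_PiE[of D "\<lambda>_. T"] assms finite_subset by blast
qed


lemma conv_convex:
  assumes "y \<in> conv_hull_fin V" "w \<in> conv_hull_fin V" "0 \<le> a" "a \<le> 1"
  shows "(\<lambda>p. a * y p + (1 - a) * w p) \<in> conv_hull_fin V"
proof -
  obtain c1 where c1: "\<forall>v\<in>V. 0 \<le> c1 v" "sum c1 V = 1" "y = (\<lambda>p. \<Sum>v\<in>V. c1 v * v p)"
    using assms(1) unfolding conv_hull_fin_def by blast
  obtain c2 where c2: "\<forall>v\<in>V. 0 \<le> c2 v" "sum c2 V = 1" "w = (\<lambda>p. \<Sum>v\<in>V. c2 v * v p)"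
    using assms(2) unfolding conv_hull_fin_def by blast
  let ?c = "\<lambda>v. a * c1 v + (1 - a) * c2 v"
  show ?thesis unfolding conv_hull_fin_def
  proof (intro CollectI exI conjI ballI)
    fix v assume "v \<in> V" then show "0 \<le> ?c v" using c1 c2 assms by simp
  next
    show "sum ?c V = 1" using c1 c2 by (simp add: sum.distrib sum_distrib_left[symmetric])
  next
    show "(\<lambda>p. a * y p + (1 - a) * w p) = (\<lambda>p. \<Sum>v\<in>V. ?c v * v p)"
    proof
      fix p
      have "(\<Sum>v\<in>V. ?c v * v p) = (\<Sum>v\<in>V. a * (c1 v * v p) + (1-a) * (c2 v * v p))"
        by (rule sum.cong) (auto simp: algebra_simps)
      also have "\<dots> = a * y p + (1 - a) * w p" using c1 c2 by (simp add: sum.distrib sum_distrib_left)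
      finally show "a * y p + (1 - a) * w p = (\<Sum>v\<in>V. ?c v * v p)" by simp
    qed
  qed
qed

lemma conv_base: assumes "finite V" "v \<in> V" shows "v \<in> conv_hull_fin V"
  unfolding conv_hull_fin_def
proof (intro CollectI exI conjI ballI)
  let ?c = "\<lambda>u. if u = v then 1 else (0::real)"
  fix u show "0 \<le> ?c u" by simp
next
  let ?c = "\<lambda>u. if u = v then 1 else (0::real)"
  show "sum ?c V = 1" using assms by simp
  show "v = (\<lambda>p. \<Sum>u\<in>V. ?c u * u p)"
  proof
    fix p
    have "(\<Sum>u\<in>V. ?c u * u p) = (\<Sum>u\<in>V. if u = v then v p else 0)" by (rule sum.cong) auto
    also have "\<dots> = v p" using assms by simp
    finally show "v p = (\<Sum>u\<in>V. ?c u * u p)" by simp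
  qed
qed

locale cop =
  fixes P :: "'a set" and prec :: "'a \<Rightarrow> 'a \<Rightarrow> bool" and A U1 U2 :: "'a set"
  assumes finP: "finite P"
    and irr: "\<And>p. p \<in> P \<Longrightarrow> \<not> prec p p"
    and trn: "\<And>p q r. p \<in> P \<Longrightarrow> q \<in> P \<Longrightarrow> r \<in> P \<Longrightarrow> prec p q \<Longrightarrow> prec q r \<Longrightarrow> prec p r"
    and AP: "A \<subseteq> P"
    and minA: "\<And>p. p \<in> P \<Longrightarrow> \<not> (\<exists>q\<in>P. prec q p) \<Longrightarrow> p \<in> A"
    and maxA: "\<And>p. p \<in> P \<Longrightarrow> \<not> (\<exists>q\<in>P. prec p q) \<Longrightarrow> p \<in> A"
    and disj: "U1 \<inter> U2 = {}" and un: "U1 \<union> U2 = P - A"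
    and adm: "\<And>u1 u2. u1 \<in> U1 \<Longrightarrow> u2 \<in> U2 \<Longrightarrow> \<not> prec u1 u2"
begin

lemma U1P: "U1 \<subseteq> P" and U2P: "U2 \<subseteq> P" and U1A: "U1 \<inter> A = {}" and U2A: "U2 \<inter> A = {}"
  using un by auto

definition R :: "('a \<times> 'a) set" where "R = {(q,p). q \<in> P \<and> p \<in> P \<and> prec q p}"

lemma R_trans: "trans R" unfolding R_def trans_def using trn by blast

lemma wfR: "wf R"
proof (rule finite_acyclic_wf)
  show "finite R" by (rule finite_subset[of _ "P \<times> P"]) (auto simp: R_def finP)
  show "acyclic R" unfolding acyclic_def using R_trans irr by (auto simp: trancl_id R_def)
qed

lemma wfR': "wf (R\<inverse>)"
proof (rule finite_acyclic_wf)
  show "finite (R\<inverse>)" by (rule finite_subset[of _ "P \<times> P"]) (auto simp: R_def finP)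
  show "acyclic (R\<inverse>)" unfolding acyclic_converse acyclic_def using R_trans irr by (auto simp: trancl_id R_def)
qed

lemma below_A0: "p \<in> P \<Longrightarrow> \<exists>b\<in>A. b = p \<or> prec b p"
proof (induction p rule: wf_induct[OF wfR])
  case (1 p)
  show ?case
  proof (cases "p \<in> A")
    case False
    then obtain q where q: "q \<in> P" "prec q p" using minA 1(2) by blast
    then have "(q,p) \<in> R" using 1(2) by (auto simp: R_def)
    then obtain b where "b \<in> A" "b = q \<or> prec b q" using 1(1) q by blast
    then show ?thesis using q trn[of b q p] 1(2) AP by blast
  qed auto
qed

lemma above_A0: "p \<in> P \<Longrightarrow> \<exists>a\<in>A. a = p \<or> prec p a"
proof (induction p rule: wf_induct[OF wfR'])
  case (1 p)
  show ?case
  proof (cases "p \<in> A")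
    case False
    then obtain q where q: "q \<in> P" "prec p q" using maxA 1(2) by blast
    then have "(q,p) \<in> R\<inverse>" using 1(2) by (auto simp: R_def)
    then obtain a where "a \<in> A" "a = q \<or> prec q a" using 1(1) q by blast
    then show ?thesis using q trn[of p q a] 1(2) AP by blast
  qed auto
qed

lemma below_A: "p \<in> P \<Longrightarrow> p \<notin> A \<Longrightarrow> \<exists>b\<in>A. prec b p"
  using below_A0 by blast
lemma above_A: "p \<in> P \<Longrightarrow> p \<notin> A \<Longrightarrow> \<exists>a\<in>A. prec p a"
  using above_A0 by blast

lemma sw_last: "sorted_wrt prec xs \<Longrightarrow> xs \<noteq> [] \<Longrightarrow> x \<in> set xs \<Longrightarrow> x = last xs \<or> prec x (last xs)"
proof -
  assume a: "sorted_wrt prec xs" "xs \<noteq> []" "x \<in> set xs"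
  have e: "xs = butlast xs @ [last xs]" using a(2) by simp
  have "sorted_wrt prec (butlast xs @ [last xs])" using a(1) e by metis
  then have "\<forall>y\<in>set (butlast xs). prec y (last xs)" by (simp add: sorted_wrt_append)
  moreover have "x \<in> set (butlast xs) \<or> x = last xs" using a(3) e
    by (metis Un_iff empty_iff empty_set list.simps(15) set_append singletonD)
  ultimately show ?thesis by blast
qed

lemma sw_distinct: "sorted_wrt prec xs \<Longrightarrow> set xs \<subseteq> P \<Longrightarrow> distinct xs"
  by (induction xs) (auto dest: irr)

definition ext :: "('a \<Rightarrow> nat) \<Rightarrow> ('a \<Rightarrow> real) \<Rightarrow> 'a \<Rightarrow> real" where
  "ext mu x q = (if q \<in> A then real (mu q) else x q)"

definition OP :: "('a \<Rightarrow> nat) \<Rightarrow> ('a \<Rightarrow> real) set" where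
  "OP mu = {x. (\<forall>p. p \<notin> P - A \<longrightarrow> x p = 0) \<and>
     (\<forall>p\<in>P. \<forall>q\<in>P. prec p q \<longrightarrow> \<not>(p\<in>A \<and> q\<in>A) \<longrightarrow> ext mu x p \<le> ext mu x q)}"

definition dn :: "'a \<Rightarrow> 'a set" where "dn p = {q\<in>P. prec q p}"

definition phi :: "('a \<Rightarrow> real) \<Rightarrow> 'a \<Rightarrow> real" where
  "phi X p = (if p \<in> U2 then X p - Max (X ` dn p) else if p \<in> U1 then X p else 0)"

definition chains :: "'a \<Rightarrow> ('a \<times> 'a list) set" where
  "chains p = {(b,cs). b \<in> A \<and> cs \<noteq> [] \<and> set cs \<subseteq> U2 \<and> sorted_wrt prec (b # cs) \<and> last cs = p}"

definition cval :: "('a \<Rightarrow> nat) \<Rightarrow> ('a \<Rightarrow> real) \<Rightarrow> 'a \<times> 'a list \<Rightarrow> real" where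
  "cval mu z bc = real (mu (fst bc)) + sum_list (map z (snd bc))"

definition psi :: "('a \<Rightarrow> nat) \<Rightarrow> ('a \<Rightarrow> real) \<Rightarrow> 'a \<Rightarrow> real" where
  "psi mu z p = (if p \<in> U2 then Max (cval mu z ` chains p) else if p \<in> U1 then z p else 0)"

abbreviation CO where "CO mu \<equiv> marked_chain_order_polytope P prec A mu U1 U2"

lemma fin_dn: "finite (dn p)" unfolding dn_def using finP by simp

lemma dn_ne: "p \<in> P - A \<Longrightarrow> dn p \<noteq> {}" unfolding dn_def using below_A AP by blast

lemma dn_U2: "p \<in> U2 \<Longrightarrow> q \<in> dn p \<Longrightarrow> q \<in> A \<or> q \<in> U2"
  unfolding dn_def using adm un by blast

lemma fin_chains: "finite (chains p)"
proof -
  have "chains p \<subseteq> A \<times> {cs. set cs \<subseteq> U2 \<and> length cs \<le> card U2}"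
  proof
    fix bc assume "bc \<in> chains p"
    then obtain b cs where bc: "bc = (b,cs)" "b \<in> A" "set cs \<subseteq> U2" "sorted_wrt prec (b # cs)"
      unfolding chains_def by auto
    have "distinct cs" using sw_distinct[of cs] bc U2P by auto
    then have "length cs \<le> card U2" using bc(3) finP U2P
      by (metis card_mono distinct_card finite_subset)
    then show "bc \<in> A \<times> {cs. set cs \<subseteq> U2 \<and> length cs \<le> card U2}" using bc by auto
  qed
  moreover have "finite (A \<times> {cs. set cs \<subseteq> U2 \<and> length cs \<le> card U2})"
    using finP AP U2P by (intro finite_cartesian_product finite_lists_length_le) (auto intro: finite_subset)
  ultimately show ?thesis by (rule finite_subset)
qed

lemma chains_ne: "p \<in> U2 \<Longrightarrow> chains p \<noteq> {}"
proof -
  assume p: "p \<in> U2"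
  then obtain b where "b \<in> A" "prec b p" using below_A U2P U2A by blast
  then have "(b,[p]) \<in> chains p" using p unfolding chains_def by auto
  then show ?thesis by auto
qed

lemma ext_psi_U2: "q \<in> U2 \<Longrightarrow> ext mu (psi mu z) q = Max (cval mu z ` chains q)"
  unfolding ext_def psi_def using U2A by auto

lemma psi_fix: assumes p: "p \<in> U2"
  shows "psi mu z p = z p + Max (ext mu (psi mu z) ` dn p)"
proof -
  let ?E = "ext mu (psi mu z)"
  have pP: "p \<in> P" "p \<notin> A" using p U2P U2A by auto
  have finE: "finite (?E ` dn p)" and neE: "?E ` dn p \<noteq> {}" using fin_dn dn_ne pP by auto
  have finC: "finite (cval mu z ` chains p)" and neC: "cval mu z ` chains p \<noteq> {}"
    using fin_chains chains_ne p by auto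
  have le1: "Max (cval mu z ` chains p) \<le> z p + Max (?E ` dn p)"
  proof (subst Max_le_iff[OF finC neC], safe)
    fix b cs assume bc: "(b,cs) \<in> chains p"
    then have b: "b \<in> A" and cs: "cs \<noteq> []" "set cs \<subseteq> U2" "sorted_wrt prec (b # cs)" "last cs = p"
      unfolding chains_def by auto
    obtain c where cse: "cs = c @ [p]" using cs by (metis append_butlast_last_id)
    show "cval mu z (b,cs) \<le> z p + Max (?E ` dn p)"
    proof (cases "c = []")
      case True
      then have "cs = [p]" using cse by simp
      then have "prec b p" using cs by simp
      then have "b \<in> dn p" using b AP unfolding dn_def by auto
      then have "?E b \<le> Max (?E ` dn p)" using finE by simp
      then show ?thesis using \<open>cs = [p]\<close> b by (simp add: cval_def ext_def)
    next
      case False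
      have sw: "sorted_wrt prec (b # c @ [p])" using cs(3) cse by simp
      then have sw1: "sorted_wrt prec (b # c)" and sw2: "\<forall>x\<in>set (b # c). prec x p"
        using sorted_wrt_append[of prec "b # c" "[p]"] by auto
      have cU2: "set c \<subseteq> U2" using cs(2) cse by simp
      let ?q = "last c"
      have qU2: "?q \<in> U2" using False cU2 by auto
      have qc: "(b, c) \<in> chains ?q" using False b cU2 sw1 unfolding chains_def by auto
      have "prec ?q p" using sw2 False by auto
      then have qd: "?q \<in> dn p" using qU2 U2P unfolding dn_def by auto
      have "cval mu z (b, c) \<le> Max (cval mu z ` chains ?q)"
        using qc fin_chains by simp
      also have "\<dots> = ?E ?q" using ext_psi_U2 qU2 by simp
      also have "\<dots> \<le> Max (?E ` dn p)" using qd finE by simp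
      finally have "cval mu z (b, c) \<le> Max (?E ` dn p)" .
      moreover have "cval mu z (b,cs) = cval mu z (b, c) + z p"
        using cse unfolding cval_def by simp
      ultimately show ?thesis by simp
    qed
  qed
  have le2: "z p + Max (?E ` dn p) \<le> Max (cval mu z ` chains p)"
  proof -
    obtain q where q: "q \<in> dn p" "?E q = Max (?E ` dn p)"
      using Max_in[OF finE neE] by auto
    have qP: "q \<in> P" "prec q p" using q unfolding dn_def by auto
    show ?thesis
    proof (cases "q \<in> A")
      case True
      then have "(q,[p]) \<in> chains p" using qP p unfolding chains_def by auto
      then have "cval mu z (q,[p]) \<le> Max (cval mu z ` chains p)" using finC by simp
      then show ?thesis using q True by (simp add: cval_def ext_def)
    next
      case False
      then have qU2: "q \<in> U2" using dn_U2 p q by blast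
      have finq: "finite (cval mu z ` chains q)" and neq: "cval mu z ` chains q \<noteq> {}"
        using fin_chains chains_ne qU2 by auto
      obtain b cs where bc: "(b,cs) \<in> chains q" "cval mu z (b,cs) = Max (cval mu z ` chains q)"
        using Max_in[OF finq neq] by auto
      then have b: "b \<in> A" and cs: "cs \<noteq> []" "set cs \<subseteq> U2" "sorted_wrt prec (b # cs)" "last cs = q"
        unfolding chains_def by auto
      have "\<forall>x\<in>set (b # cs). prec x p"
      proof
        fix x assume x: "x \<in> set (b # cs)"
        have "last (b # cs) = q" using cs by simp
        then have "x = q \<or> prec x q" using sw_last[OF cs(3) _ x] by auto
        moreover have "x \<in> P" using x b cs(2) AP U2P by auto
        ultimately show "prec x p" using qP trn[of x q p] pP by blast
      qed
      then have "sorted_wrt prec ((b # cs) @ [p])" using cs(3) by (simp add: sorted_wrt_append)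
      then have "(b, cs @ [p]) \<in> chains p" using b cs p unfolding chains_def by auto
      then have "cval mu z (b, cs @ [p]) \<le> Max (cval mu z ` chains p)" using finC by simp
      moreover have "cval mu z (b, cs @ [p]) = cval mu z (b,cs) + z p" unfolding cval_def by simp
      moreover have "?E q = cval mu z (b,cs)" using bc ext_psi_U2 qU2 by simp
      ultimately show ?thesis using q by simp
    qed
  qed
  show ?thesis using le1 le2 p unfolding psi_def by simp
qed

lemma CODall: "z \<in> CO mu \<Longrightarrow> (\<forall>p. p \<notin> P - A \<longrightarrow> z p = 0) \<and>
     (\<forall>p\<in>U1. \<forall>a\<in>A. prec p a \<longrightarrow> z p \<le> real (mu a)) \<and>
     (\<forall>q\<in>U1. \<forall>b\<in>A. prec b q \<longrightarrow> real (mu b) \<le> z q) \<and>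
     (\<forall>p\<in>U1. \<forall>q\<in>U1. prec p q \<longrightarrow> z p \<le> z q) \<and>
     (\<forall>p\<in>U2. 0 \<le> z p) \<and>
     (\<forall>a\<in>A \<union> U1. \<forall>b\<in>A \<union> U1. \<forall>cs. cs \<noteq> [] \<and> set cs \<subseteq> U2 \<and> sorted_wrt prec (b # cs @ [a])
        \<longrightarrow> sum_list (map z cs) \<le> lam_ext U1 mu z a - lam_ext U1 mu z b) \<and>
     (\<forall>q\<in>U1. \<forall>cs. cs \<noteq> [] \<and> set cs \<subseteq> U2 \<and> sorted_wrt prec (cs @ [q])
        \<longrightarrow> sum_list (map z cs) \<le> z q)"
  unfolding marked_chain_order_polytope_def mem_Collect_eq by assumption

lemma CO0: "z \<in> CO mu \<Longrightarrow> p \<notin> P - A \<Longrightarrow> z p = 0" using CODall[THEN conjunct1] by blast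
lemma CO1: "z \<in> CO mu \<Longrightarrow> p\<in>U1 \<Longrightarrow> a\<in>A \<Longrightarrow> prec p a \<Longrightarrow> z p \<le> real (mu a)" using CODall[THEN conjunct2, THEN conjunct1] by blast
lemma CO2: "z \<in> CO mu \<Longrightarrow> q\<in>U1 \<Longrightarrow> b\<in>A \<Longrightarrow> prec b q \<Longrightarrow> real (mu b) \<le> z q" using CODall[THEN conjunct2, THEN conjunct2, THEN conjunct1] by blast
lemma CO3: "z \<in> CO mu \<Longrightarrow> p\<in>U1 \<Longrightarrow> q\<in>U1 \<Longrightarrow> prec p q \<Longrightarrow> z p \<le> z q" using CODall[THEN conjunct2, THEN conjunct2, THEN conjunct2, THEN conjunct1] by blast
lemma CO4: "z \<in> CO mu \<Longrightarrow> p\<in>U2 \<Longrightarrow> 0 \<le> z p" using CODall[THEN conjunct2, THEN conjunct2, THEN conjunct2, THEN conjunct2, THEN conjunct1] by blast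
lemma CO5: "z \<in> CO mu \<Longrightarrow> a\<in>A \<union> U1 \<Longrightarrow> b\<in>A \<union> U1 \<Longrightarrow> cs \<noteq> [] \<Longrightarrow> set cs \<subseteq> U2 \<Longrightarrow> sorted_wrt prec (b # cs @ [a])
        \<Longrightarrow> sum_list (map z cs) \<le> lam_ext U1 mu z a - lam_ext U1 mu z b"
proof -
  assume "z \<in> CO mu"
  then have "\<forall>a\<in>A \<union> U1. \<forall>b\<in>A \<union> U1. \<forall>cs. cs \<noteq> [] \<and> set cs \<subseteq> U2 \<and> sorted_wrt prec (b # cs @ [a])
        \<longrightarrow> sum_list (map z cs) \<le> lam_ext U1 mu z a - lam_ext U1 mu z b" using CODall[THEN conjunct2, THEN conjunct2, THEN conjunct2, THEN conjunct2, THEN conjunct2, THEN conjunct1] by blast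
  then show "a\<in>A \<union> U1 \<Longrightarrow> b\<in>A \<union> U1 \<Longrightarrow> cs \<noteq> [] \<Longrightarrow> set cs \<subseteq> U2 \<Longrightarrow> sorted_wrt prec (b # cs @ [a])
        \<Longrightarrow> sum_list (map z cs) \<le> lam_ext U1 mu z a - lam_ext U1 mu z b" by blast
qed
lemma CO6: "z \<in> CO mu \<Longrightarrow> q\<in>U1 \<Longrightarrow> cs \<noteq> [] \<Longrightarrow> set cs \<subseteq> U2 \<Longrightarrow> sorted_wrt prec (cs @ [q])
        \<Longrightarrow> sum_list (map z cs) \<le> z q"
proof -
  assume "z \<in> CO mu"
  then have "\<forall>q\<in>U1. \<forall>cs. cs \<noteq> [] \<and> set cs \<subseteq> U2 \<and> sorted_wrt prec (cs @ [q])
        \<longrightarrow> sum_list (map z cs) \<le> z q" using CODall[THEN conjunct2, THEN conjunct2, THEN conjunct2, THEN conjunct2, THEN conjunct2, THEN conjunct2] by blast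
  then show "q\<in>U1 \<Longrightarrow> cs \<noteq> [] \<Longrightarrow> set cs \<subseteq> U2 \<Longrightarrow> sorted_wrt prec (cs @ [q])
        \<Longrightarrow> sum_list (map z cs) \<le> z q" by blast
qed

lemma psi_OP: assumes z: "z \<in> CO mu" shows "psi mu z \<in> OP mu"
  unfolding OP_def
proof (intro CollectI conjI allI impI ballI)
  fix p assume "p \<notin> P - A" then show "psi mu z p = 0" using un unfolding psi_def by auto
next
  let ?E = "ext mu (psi mu z)"
  fix p q assume pq: "p \<in> P" "q \<in> P" "prec p q" "\<not> (p \<in> A \<and> q \<in> A)"
  show "?E p \<le> ?E q"
  proof (cases "q \<in> U2")
    case True
    have "p \<in> dn q" using pq unfolding dn_def by auto
    then have "?E p \<le> Max (?E ` dn q)" using fin_dn by simp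
    moreover have "?E q = psi mu z q" using True U2A unfolding ext_def by auto
    then have "?E q = z q + Max (?E ` dn q)" using psi_fix[OF True, where mu=mu and z=z] by linarith
    ultimately show ?thesis using CO4[OF z True] by simp
  next
    case qn: False
    then have q: "q \<in> A \<or> q \<in> U1" using pq un by auto
    have Eq: "?E q = lam_ext U1 mu z q" using q U1A unfolding ext_def psi_def lam_ext_def using disj by auto
    show ?thesis
    proof (cases "p \<in> U2")
      case True
      have finC: "finite (cval mu z ` chains p)" and neC: "cval mu z ` chains p \<noteq> {}"
        using fin_chains chains_ne True by auto
      have "Max (cval mu z ` chains p) \<le> ?E q"
      proof (subst Max_le_iff[OF finC neC], safe)
        fix b cs assume "(b,cs) \<in> chains p"
        then have b: "b \<in> A" and cs: "cs \<noteq> []" "set cs \<subseteq> U2" "sorted_wrt prec (b # cs)" "last cs = p"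
          unfolding chains_def by auto
        have "\<forall>x\<in>set (b # cs). prec x q"
        proof
          fix x assume x: "x \<in> set (b # cs)"
          have "last (b # cs) = p" using cs by simp
          then have "x = p \<or> prec x p" using sw_last[OF cs(3) _ x] by auto
          moreover have "x \<in> P" using x b cs(2) AP U2P by auto
          ultimately show "prec x q" using pq trn[of x p q] by blast
        qed
        then have "sorted_wrt prec (b # cs @ [q])" using cs(3) sorted_wrt_append[of prec "b # cs" "[q]"] by simp
        then have "sum_list (map z cs) \<le> lam_ext U1 mu z q - lam_ext U1 mu z b"
          using CO5[OF z _ _ cs(1,2)] q b by blast
        moreover have "lam_ext U1 mu z b = real (mu b)" using b U1A unfolding lam_ext_def by auto
        ultimately show "cval mu z (b,cs) \<le> ?E q" using Eq unfolding cval_def by simp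
      qed
      then show ?thesis using True U2A unfolding ext_def psi_def by auto
    next
      case pn: False
      then have p: "p \<in> A \<or> p \<in> U1" using pq un by auto
      have Ep: "?E p = lam_ext U1 mu z p" using p U1A unfolding ext_def psi_def lam_ext_def using disj by auto
      show ?thesis unfolding Ep Eq lam_ext_def using p q pq CO1[OF z] CO2[OF z] CO3[OF z] U1A by auto
    qed
  qed
qed

lemma phi_psi: assumes z: "z \<in> CO mu" shows "phi (ext mu (psi mu z)) = z"
proof
  fix p
  show "phi (ext mu (psi mu z)) p = z p"
  proof (cases "p \<in> U2")
    case True
    have "phi (ext mu (psi mu z)) p = ext mu (psi mu z) p - Max (ext mu (psi mu z) ` dn p)"
      using True unfolding phi_def by simp
    moreover have "ext mu (psi mu z) p = psi mu z p" using True U2A unfolding ext_def by auto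
    ultimately show ?thesis using psi_fix[OF True, where mu=mu and z=z] by linarith
  next
    case False
    then show ?thesis using CO0[OF z, of p] un U1A unfolding phi_def ext_def psi_def by auto
  qed
qed

lemma phi_le: "c \<in> U2 \<Longrightarrow> q \<in> P \<Longrightarrow> prec q c \<Longrightarrow> phi X c \<le> X c - X q"
proof -
  assume a: "c \<in> U2" "q \<in> P" "prec q c"
  then have "q \<in> dn c" unfolding dn_def by auto
  then have "X q \<le> Max (X ` dn c)" using fin_dn by simp
  then show ?thesis using a unfolding phi_def by simp
qed

lemma chain_sum: "b \<in> P \<Longrightarrow> cs \<noteq> [] \<Longrightarrow> set cs \<subseteq> U2 \<Longrightarrow> sorted_wrt prec (b # cs)
  \<Longrightarrow> sum_list (map (phi X) cs) \<le> X (last cs) - X b"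
proof (induction cs arbitrary: b)
  case Nil then show ?case by simp
next
  case (Cons c cs)
  have c: "c \<in> U2" "prec b c" using Cons.prems by auto
  have h1: "phi X c \<le> X c - X b" using phi_le[OF c(1) Cons.prems(1) c(2)] .
  show ?case
  proof (cases "cs = []")
    case True then show ?thesis using h1 by simp
  next
    case False
    have "sum_list (map (phi X) cs) \<le> X (last cs) - X c"
      using Cons.IH[of c] c U2P Cons.prems False by auto
    then show ?thesis using h1 False by simp
  qed
qed

lemma phi_CO: assumes x: "x \<in> OP mu" shows "phi (ext mu x) \<in> CO mu"
proof -
  let ?X = "ext mu x"
  have ord: "\<And>p q. p \<in> P \<Longrightarrow> q \<in> P \<Longrightarrow> prec p q \<Longrightarrow> \<not>(p\<in>A \<and> q\<in>A) \<Longrightarrow> ?X p \<le> ?X q"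
    using x unfolding OP_def by blast
  have x0: "\<And>p. p \<notin> P - A \<Longrightarrow> x p = 0" using x unfolding OP_def by blast
  have pU1: "\<And>p. p \<in> U1 \<Longrightarrow> phi ?X p = x p" unfolding phi_def ext_def using disj U1A by auto
  have le: "\<And>a. a \<in> A \<union> U1 \<Longrightarrow> lam_ext U1 mu (phi ?X) a = ?X a"
    unfolding lam_ext_def using pU1 U1A unfolding ext_def by auto
  show ?thesis unfolding marked_chain_order_polytope_def
  proof (intro CollectI conjI allI impI ballI)
    fix p assume "p \<notin> P - A" then show "phi ?X p = 0" unfolding phi_def using un by auto
  next
    fix p a assume "p \<in> U1" "a \<in> A" "prec p a"
    then show "phi ?X p \<le> real (mu a)" using ord[of p a] pU1 U1P AP U1A unfolding ext_def by auto
  next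
    fix q b assume "q \<in> U1" "b \<in> A" "prec b q"
    then show "real (mu b) \<le> phi ?X q" using ord[of b q] pU1 U1P AP U1A unfolding ext_def by auto
  next
    fix p q assume "p \<in> U1" "q \<in> U1" "prec p q"
    moreover have "p \<notin> A" "q \<notin> A" "p \<in> P" "q \<in> P" using calculation U1A U1P by auto
    ultimately show "phi ?X p \<le> phi ?X q" using ord[of p q] pU1 unfolding ext_def by auto
  next
    fix p assume p: "p \<in> U2"
    have pP: "p \<in> P" "p \<notin> A" using p U2P U2A by auto
    have "Max (?X ` dn p) \<le> ?X p"
    proof (subst Max_le_iff)
      show "finite (?X ` dn p)" using fin_dn by simp
      show "?X ` dn p \<noteq> {}" using dn_ne[of p] pP by auto
      show "\<forall>a\<in>?X ` dn p. a \<le> ?X p" using ord pP unfolding dn_def by auto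
    qed
    then show "0 \<le> phi ?X p" using p unfolding phi_def by simp
  next
    fix a b cs assume ab: "a \<in> A \<union> U1" "b \<in> A \<union> U1" and cs: "cs \<noteq> [] \<and> set cs \<subseteq> U2 \<and> sorted_wrt prec (b # cs @ [a])"
    have sw: "sorted_wrt prec (b # cs)" and la: "prec (last cs) a"
      using cs sorted_wrt_append[of prec "b # cs" "[a]"] by auto
    have bP: "b \<in> P" using ab AP U1P by auto
    have "sum_list (map (phi ?X) cs) \<le> ?X (last cs) - ?X b" using chain_sum[OF bP _ _ sw] cs by auto
    moreover have "?X (last cs) \<le> ?X a" using ord[OF _ _ la] cs ab U2P U2A AP U1P
      by (metis Int_iff UnE empty_iff last_in_set subsetD)
    ultimately show "sum_list (map (phi ?X) cs) \<le> lam_ext U1 mu (phi ?X) a - lam_ext U1 mu (phi ?X) b"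
      using le ab by simp
  next
    fix q cs assume q: "q \<in> U1" and cs: "cs \<noteq> [] \<and> set cs \<subseteq> U2 \<and> sorted_wrt prec (cs @ [q])"
    have "hd cs \<in> U2" using cs by (auto intro: hd_in_set)
    then have hP: "hd cs \<in> P" "hd cs \<notin> A" using U2P U2A by auto
    obtain b where b: "b \<in> A" "prec b (hd cs)" using below_A[OF hP] by blast
    have sw0: "sorted_wrt prec cs" and la: "prec (last cs) q"
      using cs sorted_wrt_append[of prec cs "[q]"] by auto
    have "\<forall>y\<in>set cs. prec b y"
    proof
      fix y assume y: "y \<in> set cs"
      obtain t where t: "cs = hd cs # t" using cs by (metis list.exhaust_sel)
      have "y = hd cs \<or> prec (hd cs) y" using y sw0 t by (metis set_ConsD sorted_wrt.simps(2))
      then show "prec b y" using b trn[of b "hd cs" y] hP y cs AP U2P by auto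
    qed
    then have sw: "sorted_wrt prec (b # cs)" using sw0 by simp
    have "sum_list (map (phi ?X) cs) \<le> ?X (last cs) - ?X b" using chain_sum[OF _ _ _ sw] b AP cs by auto
    moreover have "?X (last cs) \<le> ?X q" using ord[OF _ _ la] cs q U2P U1P U1A
      by (metis IntI empty_iff last_in_set subsetD)
    moreover have "?X b \<ge> 0" using b unfolding ext_def by simp
    moreover have "?X q = x q" using q U1A unfolding ext_def by auto
    ultimately show "sum_list (map (phi ?X) cs) \<le> phi ?X q" using pU1[OF q] by linarith
  qed
qed

lemma comono:
  assumes lin: "\<forall>q\<in>P. X q = a * Y q + b * W q"
    and mono: "\<forall>u\<in>P. \<forall>v\<in>P. X u \<le> X v \<longrightarrow> Y u \<le> Y v \<and> W u \<le> W v"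
  shows "phi X p = a * phi Y p + b * phi W p"
proof (cases "p \<in> U2")
  case True
  have pP: "p \<in> P" "p \<notin> A" using True U2P U2A by auto
  have fin: "finite (X ` dn p)" "X ` dn p \<noteq> {}" using fin_dn dn_ne pP by auto
  obtain q where q: "q \<in> dn p" "X q = Max (X ` dn p)" using Max_in[OF fin] by auto
  have dP: "dn p \<subseteq> P" unfolding dn_def by auto
  have hle: "\<And>r. r \<in> dn p \<Longrightarrow> X r \<le> X q" using q fin by simp
  have hle2: "\<And>r. r \<in> dn p \<Longrightarrow> Y r \<le> Y q \<and> W r \<le> W q" using hle mono dP q by blast
  have "Max (Y ` dn p) = Y q"
    by (rule Max_eqI) (use fin_dn q hle2 in auto)
  moreover have "Max (W ` dn p) = W q"
    by (rule Max_eqI) (use fin_dn q hle2 in auto)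
  moreover have "X p = a * Y p + b * W p" "X q = a * Y q + b * W q" using lin pP q dP by auto
  ultimately show ?thesis using True q unfolding phi_def by (simp add: algebra_simps)
next
  case False
  then show ?thesis using lin U1P unfolding phi_def by auto
qed

lemma phi_int: "\<forall>q\<in>P. X q \<in> \<int> \<Longrightarrow> phi X p \<in> \<int>"
proof -
  assume i: "\<forall>q\<in>P. X q \<in> \<int>"
  show ?thesis
  proof (cases "p \<in> U2")
    case True
    have pP: "p \<in> P" "p \<notin> A" using True U2P U2A by auto
    have fin: "finite (X ` dn p)" "X ` dn p \<noteq> {}" using fin_dn dn_ne pP by auto
    have "Max (X ` dn p) \<in> X ` dn p" using Max_in[OF fin] .
    then have "Max (X ` dn p) \<in> \<int>" using i unfolding dn_def by auto
    then show ?thesis using True i pP unfolding phi_def by auto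
  next
    case False then show ?thesis using i U1P unfolding phi_def by auto
  qed
qed

lemma sum_list_int: "\<forall>p\<in>set cs. z p \<in> \<int> \<Longrightarrow> sum_list (map z cs) \<in> (\<int>::real set)"
  by (induction cs) auto

lemma psi_int: "\<forall>q\<in>P - A. z q \<in> \<int> \<Longrightarrow> psi mu z p \<in> \<int>"
proof -
  assume i: "\<forall>q\<in>P - A. z q \<in> \<int>"
  show ?thesis
  proof (cases "p \<in> U2")
    case True
    have fin: "finite (cval mu z ` chains p)" "cval mu z ` chains p \<noteq> {}"
      using fin_chains chains_ne True by auto
    obtain b cs where "(b,cs) \<in> chains p" "Max (cval mu z ` chains p) = cval mu z (b,cs)"
      using Max_in[OF fin] by auto
    moreover have "set cs \<subseteq> P - A" using calculation U2P U2A unfolding chains_def by auto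
    ultimately show ?thesis using True sum_list_int[of cs z] i unfolding psi_def cval_def by auto
  next
    case False then show ?thesis using i un unfolding psi_def by auto
  qed
qed

lemma ceil_gap:
  fixes s t :: real and N :: nat
  assumes "s \<in> \<int>" "t \<in> \<int>" "s \<le> t" "N \<ge> 1"
  shows "s - real_of_int (ceiling (s / N)) \<le> t - real_of_int (ceiling (t / N))"
proof -
  obtain i j where ij: "s = of_int i" "t = of_int j" using assms by (auto elim!: Ints_cases)
  have "t / N \<le> s / N + (t - s)"
  proof -
    have "(t - s) / N \<le> t - s" using assms by (simp add: divide_le_eq mult_le_cancel_left1)
    then show ?thesis by (simp add: diff_divide_distrib)
  qed
  then have "ceiling (t / N) \<le> ceiling (s / N + of_int (j - i))" using ij by (simp add: ceiling_mono)
  also have "\<dots> = ceiling (s / N) + (j - i)" by (rule ceiling_add_of_int)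
  finally show ?thesis using ij by simp
qed

lemma split_step:
  assumes z: "z \<in> CO (\<lambda>a. Suc n * lam a)" and zi: "z \<in> lattice_points (P - A)"
  shows "\<exists>y. y \<in> CO lam \<inter> lattice_points (P - A) \<and>
             (\<lambda>p. z p - y p) \<in> CO (\<lambda>a. n * lam a) \<inter> lattice_points (P - A)"
proof -
  let ?muN = "\<lambda>a. Suc n * lam a"
  let ?N = "real (Suc n)"
  define x where "x = psi ?muN z"
  have xO: "x \<in> OP ?muN" unfolding x_def by (rule psi_OP[OF z])
  have zint: "\<forall>q\<in>P - A. z q \<in> \<int>" using zi unfolding lattice_points_def by auto
  let ?X = "ext ?muN x"
  have Xint: "\<forall>q\<in>P. ?X q \<in> \<int>"
    using psi_int[OF zint] unfolding ext_def x_def by auto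
  define u where "u = (\<lambda>p. if p \<in> P - A then real_of_int (ceiling (x p / ?N)) else 0)"
  define w where "w = (\<lambda>p. x p - u p)"
  let ?Y = "ext lam u"
  let ?W = "ext (\<lambda>a. n * lam a) w"
  have Yeq: "\<forall>q\<in>P. ?Y q = real_of_int (ceiling (?X q / ?N))"
  proof
    fix q assume q: "q \<in> P"
    show "?Y q = real_of_int (ceiling (?X q / ?N))"
    proof (cases "q \<in> A")
      case True
      have "real (Suc n * lam q) / ?N = real (lam q)" by (simp only: of_nat_mult) simp
      then show ?thesis using True unfolding ext_def by simp
    qed (use q in \<open>auto simp: ext_def u_def\<close>)
  qed
  have Weq: "\<forall>q\<in>P. ?W q = ?X q - ?Y q"
    unfolding ext_def w_def by (auto simp: algebra_simps)
  have x0: "\<And>p. p \<notin> P - A \<Longrightarrow> x p = 0" using xO unfolding OP_def by blast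
  have xord: "\<And>p q. p \<in> P \<Longrightarrow> q \<in> P \<Longrightarrow> prec p q \<Longrightarrow> \<not>(p\<in>A \<and> q\<in>A) \<Longrightarrow> ?X p \<le> ?X q"
    using xO unfolding OP_def by blast
  have mono: "\<forall>a\<in>P. \<forall>b\<in>P. ?X a \<le> ?X b \<longrightarrow> ?Y a \<le> ?Y b \<and> ?W a \<le> ?W b"
  proof (intro ballI impI conjI)
    fix a b assume ab: "a \<in> P" "b \<in> P" "?X a \<le> ?X b"
    have "?X a / ?N \<le> ?X b / ?N" using ab by (simp add: divide_right_mono)
    then show "?Y a \<le> ?Y b" using Yeq ab by (simp add: ceiling_mono)
    have "?X a - real_of_int (ceiling (?X a / ?N)) \<le> ?X b - real_of_int (ceiling (?X b / ?N))"
      using ceil_gap[of "?X a" "?X b" "Suc n"] Xint ab by auto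
    then show "?W a \<le> ?W b" using Weq Yeq ab by simp
  qed
  have uO: "u \<in> OP lam" unfolding OP_def
  proof (intro CollectI conjI allI impI ballI)
    fix p assume "p \<notin> P - A" then show "u p = 0" unfolding u_def by auto
  next
    fix p q assume "p \<in> P" "q \<in> P" "prec p q" "\<not> (p \<in> A \<and> q \<in> A)"
    then show "?Y p \<le> ?Y q" using mono xord by blast
  qed
  have wO: "w \<in> OP (\<lambda>a. n * lam a)" unfolding OP_def
  proof (intro CollectI conjI allI impI ballI)
    fix p assume p: "p \<notin> P - A" then show "w p = 0" unfolding w_def u_def using x0[OF p] by simp
  next
    fix p q assume "p \<in> P" "q \<in> P" "prec p q" "\<not> (p \<in> A \<and> q \<in> A)"
    then show "?W p \<le> ?W q" using mono xord by blast
  qed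
  have lin: "\<forall>q\<in>P. ?X q = 1 * ?Y q + 1 * ?W q" using Weq by simp
  have phiX: "\<And>p. phi ?X p = phi ?Y p + phi ?W p" using comono[OF lin mono] by simp
  have phiz: "phi ?X = z" unfolding x_def by (rule phi_psi[OF z])
  have Yint: "\<forall>q\<in>P. ?Y q \<in> \<int>" using Yeq by auto
  have Wint: "\<forall>q\<in>P. ?W q \<in> \<int>" using Weq Yint Xint by auto
  have yC: "phi ?Y \<in> CO lam" by (rule phi_CO[OF uO])
  have wC: "phi ?W \<in> CO (\<lambda>a. n * lam a)" by (rule phi_CO[OF wO])
  have eq: "(\<lambda>p. z p - phi ?Y p) = phi ?W"
  proof
    fix p have "phi ?X p = z p" using phiz by simp
    then show "z p - phi ?Y p = phi ?W p" using phiX[of p] by linarith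
  qed
  show ?thesis
  proof (intro exI conjI IntI)
    show "phi ?Y \<in> CO lam" by (rule yC)
    show "phi ?Y \<in> lattice_points (P - A)" unfolding lattice_points_def
      using phi_int[OF Yint] CO0[OF yC] by auto
    show "(\<lambda>p. z p - phi ?Y p) \<in> CO (\<lambda>a. n * lam a)" using wC eq by simp
    show "(\<lambda>p. z p - phi ?Y p) \<in> lattice_points (P - A)" unfolding eq lattice_points_def
      using phi_int[OF Wint] CO0[OF wC] by auto
  qed
qed

lemma phi_conv:
  assumes finV: "finite (CO lam \<inter> lattice_points (P - A))"
  shows "x \<in> OP lam \<Longrightarrow> phi (ext lam x) \<in> conv_hull_fin (CO lam \<inter> lattice_points (P - A))"
proof (induction "card {p \<in> P - A. x p \<notin> \<int>}" arbitrary: x rule: less_induct)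
  case less
  let ?V = "CO lam \<inter> lattice_points (P - A)"
  let ?S = "{p \<in> P - A. x p \<notin> \<int>}"
  let ?X = "ext lam x"
  have xO: "x \<in> OP lam" by (rule less.prems)
  have x0: "\<And>p. p \<notin> P - A \<Longrightarrow> x p = 0" using xO unfolding OP_def by blast
  have xord: "\<And>p q. p \<in> P \<Longrightarrow> q \<in> P \<Longrightarrow> prec p q \<Longrightarrow> \<not>(p\<in>A \<and> q\<in>A) \<Longrightarrow> ?X p \<le> ?X q"
    using xO unfolding OP_def by blast
  have finS: "finite ?S" using finP by simp
  show ?case
  proof (cases "?S = {}")
    case True
    have Xint: "\<forall>q\<in>P. ?X q \<in> \<int>" using True unfolding ext_def by auto
    have C: "phi ?X \<in> CO lam" by (rule phi_CO[OF xO])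
    have "phi ?X \<in> lattice_points (P - A)" unfolding lattice_points_def
      using phi_int[OF Xint] CO0[OF C] by auto
    then show ?thesis using conv_base[OF finV] C by auto
  next
    case False
    let ?fr = "\<lambda>p. frac (x p)"
    define tmin where "tmin = Min (?fr ` ?S)"
    define tmax where "tmax = Max (?fr ` ?S)"
    have finF: "finite (?fr ` ?S)" "?fr ` ?S \<noteq> {}" using finS False by auto
    obtain pmin where pmin: "pmin \<in> ?S" "?fr pmin = tmin" using Min_in[OF finF] unfolding tmin_def by auto
    obtain pmax where pmax: "pmax \<in> ?S" "?fr pmax = tmax" using Max_in[OF finF] unfolding tmax_def by auto
    have frS: "\<And>p. p \<in> ?S \<Longrightarrow> tmin \<le> ?fr p \<and> ?fr p \<le> tmax" unfolding tmin_def tmax_def using finF by auto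
    have tmin_pos: "0 < tmin" using pmin frac_ge_0[of "x pmin"] frac_eq_0_iff[of "x pmin"] by auto
    have tmax_lt: "tmax < 1" using pmax frac_lt_1[of "x pmax"] by auto
    define x1 where "x1 = (\<lambda>p. if p \<in> ?S then x p + (1 - tmax) else x p)"
    define x2 where "x2 = (\<lambda>p. if p \<in> ?S then x p - tmin else x p)"
    let ?X1 = "ext lam x1"
    let ?X2 = "ext lam x2"
    have SA: "\<And>q. q \<in> P \<Longrightarrow> q \<in> ?S \<longleftrightarrow> ?X q \<notin> \<int>" unfolding ext_def by auto
    have X1e: "\<And>q. ?X1 q = (if q \<in> ?S then ?X q + (1 - tmax) else ?X q)" unfolding ext_def x1_def by auto
    have X2e: "\<And>q. ?X2 q = (if q \<in> ?S then ?X q - tmin else ?X q)" unfolding ext_def x2_def by auto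
    have Xfr: "\<And>q. q \<in> ?S \<Longrightarrow> ?fr q = frac (?X q)" unfolding ext_def by auto
    have mono: "\<forall>a\<in>P. \<forall>b\<in>P. ?X a \<le> ?X b \<longrightarrow> ?X1 a \<le> ?X1 b \<and> ?X2 a \<le> ?X2 b"
    proof (intro ballI impI)
      fix a b assume ab: "a \<in> P" "b \<in> P" "?X a \<le> ?X b"
      show "?X1 a \<le> ?X1 b \<and> ?X2 a \<le> ?X2 b"
      proof (cases "a \<in> ?S"; cases "b \<in> ?S")
        assume a: "a \<in> ?S" and b: "b \<notin> ?S"
        have bi: "?X b \<in> \<int>" and ai: "?X a \<notin> \<int>" using SA ab a b by auto
        have "?X a + (1 - frac (?X a)) \<le> ?X b" by (rule fr1[OF bi ab(3) ai])
        moreover have "frac (?X a) \<le> tmax" using frS[OF a] Xfr[OF a] by simp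
        ultimately show ?thesis using a b X1e X2e ab tmin_pos by auto
      next
        assume a: "a \<notin> ?S" and b: "b \<in> ?S"
        have ai: "?X a \<in> \<int>" using SA ab a by auto
        have "?X a \<le> ?X b - frac (?X b)" by (rule fr2[OF ai ab(3)])
        moreover have "tmin \<le> frac (?X b)" using frS[OF b] Xfr[OF b] by simp
        ultimately show ?thesis using a b X1e X2e ab tmax_lt by auto
      qed (use X1e X2e ab in auto)
    qed
    have OP1: "x1 \<in> OP lam" unfolding OP_def
    proof (intro CollectI conjI allI impI ballI)
      fix p assume "p \<notin> P - A" then show "x1 p = 0" unfolding x1_def using x0 by auto
    next
      fix p q assume "p \<in> P" "q \<in> P" "prec p q" "\<not> (p \<in> A \<and> q \<in> A)"
      then show "?X1 p \<le> ?X1 q" using mono xord by blast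
    qed
    have OP2: "x2 \<in> OP lam" unfolding OP_def
    proof (intro CollectI conjI allI impI ballI)
      fix p assume "p \<notin> P - A" then show "x2 p = 0" unfolding x2_def using x0 by auto
    next
      fix p q assume "p \<in> P" "q \<in> P" "prec p q" "\<not> (p \<in> A \<and> q \<in> A)"
      then show "?X2 p \<le> ?X2 q" using mono xord by blast
    qed
    have lt1: "card {p \<in> P - A. x1 p \<notin> \<int>} < card ?S"
    proof (rule psubset_card_mono[OF finS])
      have "x1 pmax \<in> \<int>" using pmax fr3(1)[of "x pmax"] unfolding x1_def by simp
      then show "{p \<in> P - A. x1 p \<notin> \<int>} \<subset> ?S" using pmax unfolding x1_def by auto
    qed
    have lt2: "card {p \<in> P - A. x2 p \<notin> \<int>} < card ?S"
    proof (rule psubset_card_mono[OF finS])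
      have "x2 pmin \<in> \<int>" using pmin fr3(2)[of "x pmin"] unfolding x2_def by simp
      then show "{p \<in> P - A. x2 p \<notin> \<int>} \<subset> ?S" using pmin unfolding x2_def by auto
    qed
    have IH1: "phi ?X1 \<in> conv_hull_fin ?V" using less.hyps[OF lt1 OP1] .
    have IH2: "phi ?X2 \<in> conv_hull_fin ?V" using less.hyps[OF lt2 OP2] .
    define al where "al = tmin / (tmin + (1 - tmax))"
    have al: "0 \<le> al" "al \<le> 1" unfolding al_def using tmin_pos tmax_lt by auto
    have key: "al * (1 - tmax) - (1 - al) * tmin = 0"
      unfolding al_def using tmin_pos tmax_lt by (simp add: field_simps)
    have lin: "\<forall>q\<in>P. ?X q = al * ?X1 q + (1 - al) * ?X2 q"
    proof
      fix q assume "q \<in> P"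
      show "?X q = al * ?X1 q + (1 - al) * ?X2 q"
      proof (cases "q \<in> ?S")
        case True
        then have "al * ?X1 q + (1 - al) * ?X2 q = ?X q + (al * (1 - tmax) - (1 - al) * tmin)"
          using X1e X2e by (simp add: algebra_simps)
        then show ?thesis using key by simp
      next
        case False
        have "?X1 q = ?X q" "?X2 q = ?X q" by (simp_all only: X1e X2e if_not_P[OF False])
        then show ?thesis by (simp add: algebra_simps)
      qed
    qed
    have "phi ?X = (\<lambda>p. al * phi ?X1 p + (1 - al) * phi ?X2 p)"
      using comono[OF lin mono] by auto
    then show ?thesis using conv_convex[OF IH1 IH2 al] by simp
  qed
qed

lemma CO_lin:
  assumes x: "x \<in> CO mu" and y: "y \<in> CO nu" and c: "0 \<le> c" and d: "0 \<le> d"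
    and rho: "\<And>a. real (rho a) = c * real (mu a) + d * real (nu a)"
  shows "(\<lambda>p. c * x p + d * y p) \<in> CO rho"
proof -
  let ?z = "\<lambda>p. c * x p + d * y p"
  have le: "\<And>q. lam_ext U1 rho ?z q = c * lam_ext U1 mu x q + d * lam_ext U1 nu y q"
    unfolding lam_ext_def using rho by simp
  have sl: "\<And>cs. sum_list (map ?z cs) = c * sum_list (map x cs) + d * sum_list (map y cs)"
    by (simp add: sum_list_addf sum_list_const_mult)
  have cd: "\<And>a b e f. a \<le> b \<Longrightarrow> e \<le> f \<Longrightarrow> c * a + d * e \<le> c * b + d * f"
    using c d by (simp add: add_mono mult_left_mono)
  show ?thesis unfolding marked_chain_order_polytope_def
  proof (intro CollectI conjI allI impI ballI)
    fix p assume "p \<notin> P - A" then show "?z p = 0" using CO0[OF x] CO0[OF y] by simp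
  next
    fix p a assume "p \<in> U1" "a \<in> A" "prec p a"
    then show "?z p \<le> real (rho a)" using cd[OF CO1[OF x] CO1[OF y]] rho by simp
  next
    fix q b assume "q \<in> U1" "b \<in> A" "prec b q"
    then show "real (rho b) \<le> ?z q" using cd[OF CO2[OF x] CO2[OF y]] rho by simp
  next
    fix p q assume "p \<in> U1" "q \<in> U1" "prec p q"
    then show "?z p \<le> ?z q" using cd[OF CO3[OF x] CO3[OF y]] by simp
  next
    fix p assume "p \<in> U2" then show "0 \<le> ?z p" using CO4[OF x] CO4[OF y] c d by simp
  next
    fix a b cs assume "a \<in> A \<union> U1" "b \<in> A \<union> U1" "cs \<noteq> [] \<and> set cs \<subseteq> U2 \<and> sorted_wrt prec (b # cs @ [a])"
    then have "c * sum_list (map x cs) + d * sum_list (map y cs) \<le>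
      c * (lam_ext U1 mu x a - lam_ext U1 mu x b) + d * (lam_ext U1 nu y a - lam_ext U1 nu y b)"
      using cd[OF CO5[OF x] CO5[OF y]] by blast
    then show "sum_list (map ?z cs) \<le> lam_ext U1 rho ?z a - lam_ext U1 rho ?z b"
      unfolding sl le by (simp add: algebra_simps)
  next
    fix q cs assume "q \<in> U1" "cs \<noteq> [] \<and> set cs \<subseteq> U2 \<and> sorted_wrt prec (cs @ [q])"
    then show "sum_list (map ?z cs) \<le> ?z q" unfolding sl using cd[OF CO6[OF x] CO6[OF y]] by blast
  qed
qed

lemma sum_list_conv: "sum_list (map (\<lambda>p. \<Sum>v\<in>V. c v * v p) cs) = (\<Sum>v\<in>V. c v * sum_list (map v cs)::real)"
  by (induction cs) (simp_all add: sum.distrib distrib_left)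

lemma conv_le: "\<forall>v\<in>V. 0 \<le> c v \<Longrightarrow> (\<And>v. v \<in> V \<Longrightarrow> f v \<le> g v) \<Longrightarrow> (\<Sum>v\<in>V. c v * f v) \<le> (\<Sum>v\<in>V. c v * (g v::real))"
  by (rule sum_mono) (auto intro: mult_left_mono)

lemma CO_convex: assumes V: "V \<subseteq> CO mu" and x: "x \<in> conv_hull_fin V" shows "x \<in> CO mu"
proof -
  obtain c where c: "\<forall>v\<in>V. 0 \<le> c v" "sum c V = 1" and xe: "x = (\<lambda>p. \<Sum>v\<in>V. c v * v p)"
    using x unfolding conv_hull_fin_def by blast
  have const: "\<And>k. (\<Sum>v\<in>V. c v * k) = k" using c(2) by (simp add: sum_distrib_right[symmetric])
  have xp: "\<And>p. x p = (\<Sum>v\<in>V. c v * v p)" using xe by simp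
  have le: "\<And>q. lam_ext U1 mu x q = (\<Sum>v\<in>V. c v * lam_ext U1 mu v q)"
  proof -
    fix q show "lam_ext U1 mu x q = (\<Sum>v\<in>V. c v * lam_ext U1 mu v q)"
    proof (cases "q \<in> U1")
      case True then show ?thesis unfolding lam_ext_def xp by simp
    next
      case False then show ?thesis unfolding lam_ext_def using const[of "real (mu q)"] by simp
    qed
  qed
  have vC: "\<And>v. v \<in> V \<Longrightarrow> v \<in> CO mu" using V by blast
  show ?thesis unfolding marked_chain_order_polytope_def
  proof (intro CollectI conjI allI impI ballI)
    fix p assume p: "p \<notin> P - A"
    have "\<And>v. v \<in> V \<Longrightarrow> c v * v p = 0" using CO0[OF vC p] by simp
    then show "x p = 0" unfolding xp by (simp add: sum.neutral)
  next
    fix p a assume h: "p \<in> U1" "a \<in> A" "prec p a"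
    have "x p \<le> (\<Sum>v\<in>V. c v * real (mu a))" unfolding xp
      by (rule conv_le[OF c(1)]) (erule CO1[OF vC h])
    then show "x p \<le> real (mu a)" unfolding const .
  next
    fix q b assume h: "q \<in> U1" "b \<in> A" "prec b q"
    have "(\<Sum>v\<in>V. c v * real (mu b)) \<le> x q" unfolding xp
      by (rule conv_le[OF c(1)]) (erule CO2[OF vC h])
    then show "real (mu b) \<le> x q" unfolding const .
  next
    fix p q assume h: "p \<in> U1" "q \<in> U1" "prec p q"
    show "x p \<le> x q" unfolding xp
      by (rule conv_le[OF c(1)]) (erule CO3[OF vC h])
  next
    fix p assume h: "p \<in> U2"
    have "(\<Sum>v\<in>V. c v * 0) \<le> x p" unfolding xp
      by (rule conv_le[OF c(1)]) (erule CO4[OF vC h])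
    then show "0 \<le> x p" by simp
  next
    fix a b cs assume abc: "a \<in> A \<union> U1" "b \<in> A \<union> U1" "cs \<noteq> [] \<and> set cs \<subseteq> U2 \<and> sorted_wrt prec (b # cs @ [a])"
    have "(\<Sum>v\<in>V. c v * sum_list (map v cs)) \<le> (\<Sum>v\<in>V. c v * (lam_ext U1 mu v a - lam_ext U1 mu v b))"
      by (rule conv_le[OF c(1)]) (erule CO5[OF vC abc(1,2)], use abc in auto)
    also have "\<dots> = lam_ext U1 mu x a - lam_ext U1 mu x b"
      unfolding le by (simp add: right_diff_distrib sum_subtractf)
    finally show "sum_list (map x cs) \<le> lam_ext U1 mu x a - lam_ext U1 mu x b"
      unfolding xe sum_list_conv .
  next
    fix q cs assume h: "q \<in> U1" "cs \<noteq> [] \<and> set cs \<subseteq> U2 \<and> sorted_wrt prec (cs @ [q])"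
    have "(\<Sum>v\<in>V. c v * sum_list (map v cs)) \<le> (\<Sum>v\<in>V. c v * v q)"
      by (rule conv_le[OF c(1)]) (erule CO6[OF vC h(1)], use h in auto)
    then show "sum_list (map x cs) \<le> x q" unfolding xe sum_list_conv by simp
  qed
qed

lemma CO_bound: assumes z: "z \<in> CO lam" and p: "p \<in> P - A"
  shows "0 \<le> z p \<and> z p \<le> real (\<Sum>a\<in>A. lam a)"
proof -
  have finA: "finite A" using finP AP finite_subset by blast
  have M0: "\<And>a. a \<in> A \<Longrightarrow> lam a \<le> (\<Sum>a\<in>A. lam a)"
    using finA by (intro member_le_sum) auto
  have M: "\<And>a. a \<in> A \<Longrightarrow> real (lam a) \<le> real (\<Sum>a\<in>A. lam a)"
    using M0 of_nat_le_iff by blast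
  obtain a where a: "a \<in> A" "prec p a" using above_A p by blast
  obtain b where b: "b \<in> A" "prec b p" using below_A p by blast
  show ?thesis
  proof (cases "p \<in> U1")
    case True
    then show ?thesis using CO1[OF z True a] CO2[OF z True b] M[OF a(1)] by simp
  next
    case False
    then have pU2: "p \<in> U2" using p un by auto
    have "prec b a" using trn[of b p a] a b p AP by auto
    then have "sorted_wrt prec (b # [p] @ [a])" using a b by simp
    then have "sum_list (map z [p]) \<le> lam_ext U1 lam z a - lam_ext U1 lam z b"
      using CO5[OF z, of a b "[p]"] a b pU2 by auto
    moreover have "lam_ext U1 lam z a = real (lam a)" "lam_ext U1 lam z b = real (lam b)"
      using a b U1A unfolding lam_ext_def by auto
    ultimately show ?thesis using CO4[OF z pU2] M[OF a(1)] by simp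
  qed
qed

lemma finV: "finite (CO lam \<inter> lattice_points (P - A))"
proof -
  let ?M = "int (\<Sum>a\<in>A. lam a)"
  let ?T = "real_of_int ` {0..?M}"
  have "CO lam \<inter> lattice_points (P - A) \<subseteq> {x. (\<forall>p\<in>P - A. x p \<in> ?T) \<and> (\<forall>p. p \<notin> P - A \<longrightarrow> x p = 0)}"
  proof (intro subsetI CollectI conjI allI impI ballI)
    fix x p assume x: "x \<in> CO lam \<inter> lattice_points (P - A)" and p: "p \<in> P - A"
    have b: "0 \<le> x p" "x p \<le> real (\<Sum>a\<in>A. lam a)" using CO_bound[OF _ p] x by auto
    obtain k where k: "x p = of_int k" using x p unfolding lattice_points_def by (auto elim!: Ints_cases)
    have "real_of_int k \<le> real_of_int ?M" using b k by simp
    then have "k \<le> ?M" by (simp only: of_int_le_iff)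
    moreover have "0 \<le> k" using b k by simp
    ultimately show "x p \<in> ?T" using k by auto
  next
    fix x p assume "x \<in> CO lam \<inter> lattice_points (P - A)" "p \<notin> P - A"
    then show "x p = 0" unfolding lattice_points_def by auto
  qed
  moreover have "finite {x. (\<forall>p\<in>P - A. x p \<in> ?T) \<and> (\<forall>p. p \<notin> P - A \<longrightarrow> x p = 0)}"
    by (rule fin_funs) (use finP in auto)
  ultimately show ?thesis by (rule finite_subset)
qed

lemma lattice_part: "lattice_polytope (P - A) (CO lam)"
  unfolding lattice_polytope_def
proof (intro exI conjI)
  let ?V = "CO lam \<inter> lattice_points (P - A)"
  show "finite ?V" by (rule finV)
  show "?V \<subseteq> lattice_points (P - A)" by blast
  show "CO lam = conv_hull_fin ?V"
  proof
    show "CO lam \<subseteq> conv_hull_fin ?V"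
    proof
      fix z assume z: "z \<in> CO lam"
      have "phi (ext lam (psi lam z)) \<in> conv_hull_fin ?V" by (rule phi_conv[OF finV psi_OP[OF z]])
      then show "z \<in> conv_hull_fin ?V" using phi_psi[OF z] by simp
    qed
    show "conv_hull_fin ?V \<subseteq> CO lam" using CO_convex[of ?V lam] by blast
  qed
qed

lemma decomp: "z \<in> CO (\<lambda>a. Suc m * lam a) \<inter> lattice_points (P - A) \<Longrightarrow>
  z \<in> minkowski_power (Suc m) (CO lam \<inter> lattice_points (P - A))"
proof (induction m arbitrary: z)
  case 0
  then have "z \<in> CO lam \<inter> lattice_points (P - A)" by simp
  then show ?case unfolding minkowski_power_def by (intro CollectI exI[of _ "\<lambda>_. z"]) auto
next
  case (Suc m)
  obtain y where y: "y \<in> CO lam \<inter> lattice_points (P - A)"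
    and zy: "(\<lambda>p. z p - y p) \<in> CO (\<lambda>a. Suc m * lam a) \<inter> lattice_points (P - A)"
    using split_step[of z "Suc m" lam] Suc.prems by blast
  obtain ys where ys: "\<forall>i<Suc m. ys i \<in> CO lam \<inter> lattice_points (P - A)"
    and e: "(\<lambda>p. z p - y p) = (\<lambda>p. \<Sum>i<Suc m. ys i p)"
    using Suc.IH[OF zy] unfolding minkowski_power_def by blast
  let ?ys = "\<lambda>i. if i < Suc m then ys i else y"
  show ?case unfolding minkowski_power_def
  proof (intro CollectI exI[of _ ?ys] conjI allI impI)
    fix i assume "i < Suc (Suc m)" then show "?ys i \<in> CO lam \<inter> lattice_points (P - A)" using ys y by auto
  next
    show "z = (\<lambda>p. \<Sum>i<Suc (Suc m). ?ys i p)"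
    proof
      fix p
      have "(\<Sum>i<Suc (Suc m). ?ys i p) = (\<Sum>i<Suc m. ?ys i p) + y p" by simp
      also have "(\<Sum>i<Suc m. ?ys i p) = (\<Sum>i<Suc m. ys i p)" by (rule sum.cong) auto
      also have "\<dots> = z p - y p" using fun_cong[OF e, of p] by simp
      finally show "z p = (\<Sum>i<Suc (Suc m). ?ys i p)" by simp
    qed
  qed
qed

lemma compose: "\<forall>i<Suc m. y i \<in> CO lam \<inter> lattice_points (P - A) \<Longrightarrow>
  (\<lambda>p. \<Sum>i<Suc m. y i p) \<in> CO (\<lambda>a. Suc m * lam a) \<inter> lattice_points (P - A)"
proof (induction m)
  case 0
  then show ?case by simp
next
  case (Suc m)
  have IH: "(\<lambda>p. \<Sum>i<Suc m. y i p) \<in> CO (\<lambda>a. Suc m * lam a) \<inter> lattice_points (P - A)"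
    using Suc by simp
  have yl: "y (Suc m) \<in> CO lam \<inter> lattice_points (P - A)" using Suc.prems by simp
  have "(\<lambda>p. 1 * (\<Sum>i<Suc m. y i p) + 1 * y (Suc m) p) \<in> CO (\<lambda>a. Suc (Suc m) * lam a)"
    by (rule CO_lin) (use IH yl in auto)
  moreover have "(\<lambda>p. 1 * (\<Sum>i<Suc m. y i p) + 1 * y (Suc m) p) = (\<lambda>p. \<Sum>i<Suc (Suc m). y i p)"
    by simp
  moreover have "(\<lambda>p. \<Sum>i<Suc (Suc m). y i p) \<in> lattice_points (P - A)"
    using IH yl unfolding lattice_points_def by auto
  ultimately show ?case by simp
qed

lemma normal_part: "normal_polytope (P - A) (CO lam)"
  unfolding normal_polytope_def
proof (intro conjI allI impI)
  show "lattice_polytope (P - A) (CO lam)" by (rule lattice_part)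
  fix n :: nat assume n: "1 \<le> n"
  then obtain m where m: "n = Suc m" by (cases n) auto
  let ?V = "CO lam \<inter> lattice_points (P - A)"
  show "dilate n (CO lam) \<inter> lattice_points (P - A) = minkowski_power n ?V"
  proof
    show "dilate n (CO lam) \<inter> lattice_points (P - A) \<subseteq> minkowski_power n ?V"
    proof
      fix z assume z: "z \<in> dilate n (CO lam) \<inter> lattice_points (P - A)"
      then obtain x where x: "x \<in> CO lam" and ze: "z = (\<lambda>p. real n * x p)" unfolding dilate_def by auto
      have "(\<lambda>p. real n * x p + 0 * x p) \<in> CO (\<lambda>a. n * lam a)"
        by (rule CO_lin[OF x x]) auto
      then have "z \<in> CO (\<lambda>a. Suc m * lam a)" using ze m by simp
      then show "z \<in> minkowski_power n ?V" using decomp[of z m] z m by simp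
    qed
    show "minkowski_power n ?V \<subseteq> dilate n (CO lam) \<inter> lattice_points (P - A)"
    proof
      fix z assume "z \<in> minkowski_power n ?V"
      then obtain y where y: "\<forall>i<n. y i \<in> ?V" and ze: "z = (\<lambda>p. \<Sum>i<n. y i p)"
        unfolding minkowski_power_def by blast
      have "(\<lambda>p. \<Sum>i<Suc m. y i p) \<in> CO (\<lambda>a. Suc m * lam a) \<inter> lattice_points (P - A)"
        by (rule compose) (use y m in blast)
      then have zC: "z \<in> CO (\<lambda>a. n * lam a) \<inter> lattice_points (P - A)"
        using ze m by simp
      have "(\<lambda>p. (1 / real n) * z p + 0 * z p) \<in> CO lam"
        by (rule CO_lin) (use zC n in auto)
      then have x: "(\<lambda>p. z p / real n) \<in> CO lam" by simp
      have "z = (\<lambda>p. real n * (z p / real n))" using n by (auto simp: fun_eq_iff)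
      then have "z \<in> dilate n (CO lam)" unfolding dilate_def using x by (rule image_eqI)
      then show "z \<in> dilate n (CO lam) \<inter> lattice_points (P - A)" using zC by blast
    qed
  qed
qed

end

theorem corollary2p2:
  fixes P A U1 U2 :: "'a set" and prec :: "'a \<Rightarrow> 'a \<Rightarrow> bool" and lam :: "'a \<Rightarrow> nat"
  assumes "marked_poset P prec A lam"
    and "admissible_decomposition P prec A U1 U2"
  shows "lattice_polytope (P - A) (marked_chain_order_polytope P prec A lam U1 U2)
    \<and> normal_polytope (P - A) (marked_chain_order_polytope P prec A lam U1 U2)"
proof -
  interpret cop P prec A U1 U2
    using assms unfolding marked_poset_def admissible_decomposition_def
    by unfold_locales blast+
  show ?thesis using lattice_part normal_part by blast
qed

end
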